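(* For every $\eta>0$ there exists $k_0=k_0(\eta)$ such that for all $k\ge k_0$ and $n\ge2k$ the following holds. Let $P\subseteq[n]$ with $\eta\le|P|/n\le1-\eta$, and let $M$ be a matching of size $k$ in the complete graph on $[n]$, chosen uniformly at random among all such matchings. Then with probability at least $\frac56$, the number of edges $uv\in M$ with $u\in P$ and $v\notin P$ is at least $\eta k/25$. *)

theory Defs
  imports "HOL-Probability.Probability"
begin

definition complete_edges :: "nat \<Rightarrow> nat set set" where
  "complete_edges n = {e. \<exists>u v. e = {u, v} \<and> u \<noteq> v \<and> u \<in> {1..n} \<and> v \<in> {1..n}}"

definition matchings :: "nat \<Rightarrow> nat \<Rightarrow> nat set set set" where
  "matchings n k = {M. M \<subseteq> complete_edges n \<and> card M = k \<and>
      (\<forall>e\<in>M. \<forall>f\<in>M. e \<noteq> f \<longrightarrow> e \<inter> f = {})}"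

definition crossing :: "nat set \<Rightarrow> nat set set \<Rightarrow> nat" where
  "crossing P M = card {e \<in> M. \<exists>u v. e = {u, v} \<and> u \<in> P \<and> v \<notin> P}"

end

theory Submission
  imports Defs
begin
lemma cnt_ind: "finite Y \<Longrightarrow> card {y\<in>Y. R y} = (\<Sum>y\<in>Y. if R y then 1 else 0)"
  by (simp add: sum.If_cases Int_def)

lemma dc: "finite X \<Longrightarrow> finite Y \<Longrightarrow> (\<Sum>x\<in>X. card {y\<in>Y. R x y}) = (\<Sum>y\<in>Y. card {x\<in>X. R x y})"
  by (simp add: cnt_ind sum.swap[of _ X])

definition sw :: "'a \<Rightarrow> 'a \<Rightarrow> 'a \<Rightarrow> 'a" where
  "sw a b z = (if z = a then b else if z = b then a else z)"

lemma sw_inj: "inj (sw a b)"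
  by (auto simp: inj_def sw_def split: if_splits)

lemma sw_into: "a \<in> S \<Longrightarrow> b \<in> S \<Longrightarrow> z \<in> S \<Longrightarrow> sw a b z \<in> S"
  by (simp add: sw_def)

lemma perm_exists:
  "distinct xs \<Longrightarrow> distinct ys \<Longrightarrow> length xs = length ys \<Longrightarrow> set xs \<subseteq> S \<Longrightarrow> set ys \<subseteq> S
   \<Longrightarrow> \<exists>\<sigma>. inj \<sigma> \<and> \<sigma> ` S \<subseteq> S \<and> map \<sigma> xs = ys"
proof (induction xs arbitrary: ys)
  case Nil then show ?case by (intro exI[of _ id]) auto
next
  case (Cons x xs)
  then obtain y ys' where ys: "ys = y # ys'" by (cases ys) auto
  have ih: "distinct xs" "distinct ys'" "length xs = length ys'" "set xs \<subseteq> S" "set ys' \<subseteq> S"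
    using Cons.prems ys by simp_all
  obtain \<sigma> where s: "inj \<sigma>" "\<sigma> ` S \<subseteq> S" "map \<sigma> xs = ys'"
    using Cons.IH[OF ih] by blast
  define \<tau> where "\<tau> = sw (\<sigma> x) y \<circ> \<sigma>"
  have injt: "inj \<tau>" unfolding \<tau>_def by (rule inj_compose[OF sw_inj s(1)])
  have xS: "\<sigma> x \<in> S" using s(2) Cons.prems(4) by auto
  have yS: "y \<in> S" using Cons.prems(5) ys by simp
  have "\<tau> ` S \<subseteq> S"
  proof
    fix w assume "w \<in> \<tau> ` S"
    then obtain z where z: "z \<in> S" "w = \<tau> z" by blast
    then have "\<sigma> z \<in> S" using s(2) by blast
    then show "w \<in> S" unfolding z(2) \<tau>_def comp_def by (rule sw_into[OF xS yS])
  qed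
  moreover have "map \<tau> xs = ys'"
  proof -
    have fx: "sw (\<sigma> x) y z = z" if z: "z \<in> set ys'" for z
    proof -
      have "z \<noteq> y" using Cons.prems(2) ys z by auto
      moreover have "z \<noteq> \<sigma> x"
      proof
        assume "z = \<sigma> x"
        with z s(3) obtain x' where "x' \<in> set xs" "\<sigma> x' = \<sigma> x" by auto
        with s(1) have "x \<in> set xs" by (metis injD)
        with Cons.prems(1) show False by simp
      qed
      ultimately show ?thesis by (simp add: sw_def)
    qed
    have "map \<tau> xs = map (sw (\<sigma> x) y) ys'" by (simp add: \<tau>_def s(3)[symmetric])
    also have "\<dots> = ys'" using fx by (rule map_idI)
    finally show ?thesis .
  qed
  moreover have "\<tau> x = y" by (simp add: \<tau>_def sw_def)
  ultimately show ?case using ys injt by (intro exI[of _ \<tau>]) simp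
qed

lemma inj_img: "inj \<sigma> \<Longrightarrow> inj ((`) \<sigma>)"
  by (rule injI) (simp add: inj_image_eq_iff)

lemma fin_E: "finite (complete_edges n)"
  by (rule finite_subset[of _ "Pow {1..n}"]) (auto simp: complete_edges_def)

lemma fin_M: "finite (matchings n k)"
  by (rule finite_subset[of _ "Pow (complete_edges n)"]) (auto simp: matchings_def intro: fin_E)

lemma E_char: "complete_edges n = {A. A \<subseteq> {1..n} \<and> card A = 2}"
  unfolding complete_edges_def card_2_iff by blast

lemma img_matching:
  assumes "inj \<sigma>" "\<sigma> ` {1..n} \<subseteq> {1..n}" "M \<in> matchings n k"
  shows "(`) \<sigma> ` M \<in> matchings n k"
proof -
  have M: "M \<subseteq> complete_edges n" "card M = k" "\<forall>e\<in>M. \<forall>f\<in>M. e \<noteq> f \<longrightarrow> e \<inter> f = {}"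
    using assms(3) by (auto simp: matchings_def)
  have inj2: "inj ((`) \<sigma>)" using assms(1) by (rule inj_img)
  have "(`) \<sigma> ` M \<subseteq> complete_edges n"
  proof
    fix x assume "x \<in> (`) \<sigma> ` M"
    then obtain e where e: "e \<in> M" "x = \<sigma> ` e" by auto
    then obtain u v where uv: "e = {u,v}" "u \<noteq> v" "u \<in> {1..n}" "v \<in> {1..n}"
      using M(1) unfolding complete_edges_def by blast
    have "x = {\<sigma> u, \<sigma> v}" using e uv by auto
    moreover have "\<sigma> u \<noteq> \<sigma> v" using uv assms(1) by (auto dest: injD)
    moreover have "\<sigma> u \<in> {1..n}" "\<sigma> v \<in> {1..n}" using uv assms(2) by blast+
    ultimately show "x \<in> complete_edges n" unfolding complete_edges_def by blast
  qed
  moreover have "card ((`) \<sigma> ` M) = k"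
    using M(2) inj_on_subset[OF inj2 subset_UNIV] by (simp add: card_image)
  moreover have "\<forall>a\<in>(`) \<sigma> ` M. \<forall>b\<in>(`) \<sigma> ` M. a \<noteq> b \<longrightarrow> a \<inter> b = {}"
  proof (intro ballI impI)
    fix a b assume ab: "a \<in> (`) \<sigma> ` M" "b \<in> (`) \<sigma> ` M" "a \<noteq> b"
    then obtain e f where ef: "e \<in> M" "f \<in> M" "a = \<sigma> ` e" "b = \<sigma> ` f" by auto
    with ab(3) M(3) have "e \<inter> f = {}" by auto
    then show "a \<inter> b = {}" using ef image_Int[OF assms(1), of e f] by auto
  qed
  ultimately show ?thesis by (simp add: matchings_def)
qed

lemma cnt_le:
  assumes "inj \<sigma>" "\<sigma> ` {1..n} \<subseteq> {1..n}"
  shows "card {M \<in> matchings n k. F \<subseteq> M} \<le> card {M \<in> matchings n k. (`) \<sigma> ` F \<subseteq> M}"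
proof (rule card_inj_on_le[of "(`) ((`) \<sigma>)"])
  have "inj ((`) ((`) \<sigma>))" using assms(1) by (intro inj_img)
  then show "inj_on ((`) ((`) \<sigma>)) {M \<in> matchings n k. F \<subseteq> M}" by (rule inj_on_subset) simp
  show "(`) ((`) \<sigma>) ` {M \<in> matchings n k. F \<subseteq> M} \<subseteq> {M \<in> matchings n k. (`) \<sigma> ` F \<subseteq> M}"
    using img_matching[OF assms] by auto
  show "finite {M \<in> matchings n k. (`) \<sigma> ` F \<subseteq> M}" using fin_M by auto
qed

lemma cnt_sym1:
  assumes "e \<in> complete_edges n" "e' \<in> complete_edges n"
  shows "card {M \<in> matchings n k. e \<in> M} = card {M \<in> matchings n k. e' \<in> M}"
proof -
  have key: "card {M \<in> matchings n k. {a} \<subseteq> M} \<le> card {M \<in> matchings n k. {b} \<subseteq> M}"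
    if ha: "a \<in> complete_edges n" and hb: "b \<in> complete_edges n" for a b
  proof -
    obtain u v where a: "a = {u,v}" "u \<noteq> v" "u \<in> {1..n}" "v \<in> {1..n}"
      using ha unfolding complete_edges_def by blast
    obtain x y where b: "b = {x,y}" "x \<noteq> y" "x \<in> {1..n}" "y \<in> {1..n}"
      using hb unfolding complete_edges_def by blast
    obtain \<sigma> where s: "inj \<sigma>" "\<sigma> ` {1..n} \<subseteq> {1..n}" "map \<sigma> [u,v] = [x,y]"
      using perm_exists[of "[u,v]" "[x,y]" "{1..n}"] a b by auto
    have "(`) \<sigma> ` {a} = {b}" using s(3) a b by auto
    then show ?thesis using cnt_le[OF s(1,2), where F="{a}" and k=k] by simp
  qed
  show ?thesis using key[OF assms] key[OF assms(2,1)] by simp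
qed

lemma cnt_sym2:
  assumes "a1 \<in> complete_edges n" "a2 \<in> complete_edges n" "a1 \<inter> a2 = {}"
    "b1 \<in> complete_edges n" "b2 \<in> complete_edges n" "b1 \<inter> b2 = {}"
  shows "card {M \<in> matchings n k. a1 \<in> M \<and> a2 \<in> M} = card {M \<in> matchings n k. b1 \<in> M \<and> b2 \<in> M}"
proof -
  have key: "card {M \<in> matchings n k. {a1, a2} \<subseteq> M} \<le> card {M \<in> matchings n k. {b1, b2} \<subseteq> M}"
    if h: "a1 \<in> complete_edges n" "a2 \<in> complete_edges n" "a1 \<inter> a2 = {}"
    "b1 \<in> complete_edges n" "b2 \<in> complete_edges n" "b1 \<inter> b2 = {}" for a1 a2 b1 b2
  proof -
    obtain u v where a: "a1 = {u,v}" "u \<noteq> v" "u \<in> {1..n}" "v \<in> {1..n}"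
      using h(1) unfolding complete_edges_def by blast
    obtain u' v' where a': "a2 = {u',v'}" "u' \<noteq> v'" "u' \<in> {1..n}" "v' \<in> {1..n}"
      using h(2) unfolding complete_edges_def by blast
    obtain x y where b: "b1 = {x,y}" "x \<noteq> y" "x \<in> {1..n}" "y \<in> {1..n}"
      using h(4) unfolding complete_edges_def by blast
    obtain x' y' where b': "b2 = {x',y'}" "x' \<noteq> y'" "x' \<in> {1..n}" "y' \<in> {1..n}"
      using h(5) unfolding complete_edges_def by blast
    have d1: "distinct [u,v,u',v']" using a a' h(3) by auto
    have d2: "distinct [x,y,x',y']" using b b' h(6) by auto
    have s1: "set [u,v,u',v'] \<subseteq> {1..n}" using a a' by (simp only: set_simps insert_subset) simp
    have s2: "set [x,y,x',y'] \<subseteq> {1..n}" using b b' by (simp only: set_simps insert_subset) simp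
    obtain \<sigma> where s: "inj \<sigma>" "\<sigma> ` {1..n} \<subseteq> {1..n}" "map \<sigma> [u,v,u',v'] = [x,y,x',y']"
      using perm_exists[OF d1 d2 _ s1 s2] by auto
    have "\<sigma> u = x" "\<sigma> v = y" "\<sigma> u' = x'" "\<sigma> v' = y'" using s(3) by simp_all
    then have "(`) \<sigma> ` {a1, a2} = {b1, b2}" using a b a' b' by simp
    then show ?thesis using cnt_le[OF s(1,2), where F="{a1,a2}" and k=k] by simp
  qed
  show ?thesis using key[OF assms] key[OF assms(4,5,6,1,2,3)] by simp
qed

definition Cr :: "nat set \<Rightarrow> nat \<Rightarrow> nat set set" where
  "Cr P n = {e \<in> complete_edges n. \<exists>u v. e = {u,v} \<and> u \<in> P \<and> v \<notin> P}"

definition DE :: "nat \<Rightarrow> (nat set \<times> nat set) set" where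
  "DE n = {ef \<in> complete_edges n \<times> complete_edges n. fst ef \<inter> snd ef = {}}"

lemma L1:
  assumes "M \<in> matchings n k"
  shows "crossing P M = card (M \<inter> Cr P n)"
proof -
  have sub: "M \<subseteq> complete_edges n" using assms by (simp add: matchings_def)
  have "{e \<in> M. \<exists>u v. e = {u, v} \<and> u \<in> P \<and> v \<notin> P} = M \<inter> Cr P n"
    using sub unfolding Cr_def by blast
  then show ?thesis unfolding crossing_def by simp
qed

lemma L2: "finite A \<Longrightarrow> (\<Sum>M\<in>matchings n k. card (M \<inter> A)) = (\<Sum>e\<in>A. card {M\<in>matchings n k. e \<in> M})"
proof -
  assume A: "finite A"
  have "(\<Sum>M\<in>matchings n k. card (M \<inter> A)) = (\<Sum>M\<in>matchings n k. card {e\<in>A. e \<in> M})"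
    by (intro sum.cong refl arg_cong[where f=card]) blast
  also have "\<dots> = (\<Sum>e\<in>A. card {M\<in>matchings n k. e \<in> M})"
    by (rule dc[OF fin_M A])
  finally show ?thesis .
qed

lemma edge12: "n \<ge> 2 \<Longrightarrow> {1,2} \<in> complete_edges n"
  unfolding complete_edges_def by force

lemma edge34: "n \<ge> 4 \<Longrightarrow> {3,4} \<in> complete_edges n"
  unfolding complete_edges_def by force

lemma L3:
  assumes "n \<ge> 2" "A \<subseteq> complete_edges n"
  shows "(\<Sum>M\<in>matchings n k. card (M \<inter> A)) = card A * card {M\<in>matchings n k. {1,2} \<in> M}"
proof -
  have fA: "finite A" using assms(2) fin_E finite_subset by blast
  have "(\<Sum>M\<in>matchings n k. card (M \<inter> A)) = (\<Sum>e\<in>A. card {M\<in>matchings n k. e \<in> M})"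
    by (rule L2[OF fA])
  also have "\<dots> = (\<Sum>e\<in>A. card {M\<in>matchings n k. {1,2} \<in> M})"
    using assms cnt_sym1[OF _ edge12[OF assms(1)]] by (intro sum.cong refl) blast
  finally show ?thesis by simp
qed

lemma edge_sub: "e \<in> complete_edges n \<Longrightarrow> e \<subseteq> {1..n}"
  unfolding complete_edges_def by blast

lemma edge_ne: "e \<in> complete_edges n \<Longrightarrow> e \<noteq> {}"
  unfolding complete_edges_def by blast

lemma L4:
  assumes "M \<in> matchings n k" "A \<subseteq> complete_edges n"
  shows "card (M \<inter> A) * card (M \<inter> A) = card (M \<inter> A) + card {ef \<in> DE n \<inter> (A \<times> A). fst ef \<in> M \<and> snd ef \<in> M}"
proof -
  have M: "M \<subseteq> complete_edges n" "\<forall>e\<in>M. \<forall>f\<in>M. e \<noteq> f \<longrightarrow> e \<inter> f = {}"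
    using assms(1) by (auto simp: matchings_def)
  have fA: "finite A" using assms(2) fin_E finite_subset by blast
  have eq: "(M \<inter> A) \<times> (M \<inter> A) = (\<lambda>e. (e,e)) ` (M \<inter> A) \<union> {ef \<in> DE n \<inter> (A \<times> A). fst ef \<in> M \<and> snd ef \<in> M}"
  proof (intro equalityI subsetI)
    fix x assume x: "x \<in> (M \<inter> A) \<times> (M \<inter> A)"
    obtain e f where ef: "x = (e,f)" by (cases x)
    show "x \<in> (\<lambda>e. (e,e)) ` (M \<inter> A) \<union> {ef \<in> DE n \<inter> (A \<times> A). fst ef \<in> M \<and> snd ef \<in> M}"
    proof (cases "e = f")
      case True then show ?thesis using x ef by blast
    next
      case False
      then have "e \<inter> f = {}" using M(2) x ef by blast
      moreover have "e \<in> complete_edges n" "f \<in> complete_edges n" using M(1) x ef by blast+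
      ultimately show ?thesis using x ef unfolding DE_def by simp
    qed
  next
    fix x assume "x \<in> (\<lambda>e. (e,e)) ` (M \<inter> A) \<union> {ef \<in> DE n \<inter> (A \<times> A). fst ef \<in> M \<and> snd ef \<in> M}"
    then show "x \<in> (M \<inter> A) \<times> (M \<inter> A)" by auto
  qed
  have disj: "(\<lambda>e. (e,e)) ` (M \<inter> A) \<inter> {ef \<in> DE n \<inter> (A \<times> A). fst ef \<in> M \<and> snd ef \<in> M} = {}"
  proof -
    have "e \<inter> e \<noteq> {}" if "e \<in> A" for e using edge_ne that assms(2) by auto
    then show ?thesis unfolding DE_def by auto
  qed
  have "card ((M \<inter> A) \<times> (M \<inter> A)) = card ((\<lambda>e. (e,e)) ` (M \<inter> A)) + card {ef \<in> DE n \<inter> (A \<times> A). fst ef \<in> M \<and> snd ef \<in> M}"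
    unfolding eq using fA by (intro card_Un_disjoint disj) auto
  moreover have "card ((\<lambda>e. (e,e)) ` (M \<inter> A)) = card (M \<inter> A)"
    by (rule card_image) (auto simp: inj_on_def)
  ultimately show ?thesis by (simp add: card_cartesian_product)
qed

lemma fin_DE: "finite (DE n)"
  unfolding DE_def using fin_E by auto

lemma L5:
  assumes "n \<ge> 4" "D \<subseteq> DE n"
  shows "(\<Sum>M\<in>matchings n k. card {ef \<in> D. fst ef \<in> M \<and> snd ef \<in> M}) = card D * card {M\<in>matchings n k. {1,2} \<in> M \<and> {3,4} \<in> M}"
proof -
  have fD: "finite D" using assms(2) fin_DE finite_subset by blast
  have "(\<Sum>M\<in>matchings n k. card {ef \<in> D. fst ef \<in> M \<and> snd ef \<in> M}) = (\<Sum>ef\<in>D. card {M\<in>matchings n k. fst ef \<in> M \<and> snd ef \<in> M})"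
    by (rule dc[OF fin_M fD])
  also have "\<dots> = (\<Sum>ef\<in>D. card {M\<in>matchings n k. {1,2} \<in> M \<and> {3,4} \<in> M})"
  proof (intro sum.cong refl)
    fix ef assume "ef \<in> D"
    then have "fst ef \<in> complete_edges n" "snd ef \<in> complete_edges n" "fst ef \<inter> snd ef = {}"
      using assms(2) unfolding DE_def by auto
    moreover have "{1,2} \<inter> {3,4} = ({}::nat set)" by auto
    ultimately show "card {M\<in>matchings n k. fst ef \<in> M \<and> snd ef \<in> M} = card {M\<in>matchings n k. {1,2} \<in> M \<and> {3,4} \<in> M}"
      using assms(1) by (intro cnt_sym2 edge12 edge34) auto
  qed
  finally show ?thesis by simp
qed

lemma L7: "card (complete_edges n) = n choose 2"
  unfolding E_char by (subst n_subsets) auto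

lemma L6: "card (DE n) = (n choose 2) * ((n - 2) choose 2)"
proof -
  have "DE n = Sigma (complete_edges n) (\<lambda>e. {f \<in> complete_edges n. e \<inter> f = {}})"
    unfolding DE_def by auto
  moreover have "card {f \<in> complete_edges n. e \<inter> f = {}} = (n - 2) choose 2" if e: "e \<in> complete_edges n" for e
  proof -
    have e2: "e \<subseteq> {1..n}" "card e = 2" using e unfolding E_char by auto
    have "{f \<in> complete_edges n. e \<inter> f = {}} = {A. A \<subseteq> {1..n} - e \<and> card A = 2}"
      unfolding E_char by auto
    moreover have "card ({1..n} - e) = n - 2" using e2 by (simp add: card_Diff_subset finite_subset)
    ultimately show ?thesis by (simp add: n_subsets)
  qed
  ultimately show ?thesis using fin_E by (simp add: card_SigmaI L7)
qed

lemma L8: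
  assumes "P \<subseteq> {1..n}"
  shows "card (Cr P n) = card P * (n - card P)"
proof -
  have "Cr P n = (\<lambda>(u,v). {u,v}) ` (P \<times> ({1..n} - P))"
  proof
    show "Cr P n \<subseteq> (\<lambda>(u,v). {u,v}) ` (P \<times> ({1..n} - P))"
    proof
      fix e assume "e \<in> Cr P n"
      then obtain u v where "e \<in> complete_edges n" "e = {u,v}" "u \<in> P" "v \<notin> P" unfolding Cr_def by blast
      moreover then have "v \<in> {1..n}" using edge_sub by blast
      ultimately show "e \<in> (\<lambda>(u,v). {u,v}) ` (P \<times> ({1..n} - P))" by auto
    qed
    show "(\<lambda>(u,v). {u,v}) ` (P \<times> ({1..n} - P)) \<subseteq> Cr P n"
    proof
      fix e assume "e \<in> (\<lambda>(u,v). {u,v}) ` (P \<times> ({1..n} - P))"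
      then obtain u v where uv: "e = {u,v}" "u \<in> P" "v \<in> {1..n}" "v \<notin> P" by auto
      then have "u \<noteq> v" "u \<in> {1..n}" using assms by auto
      with uv show "e \<in> Cr P n" unfolding Cr_def complete_edges_def by blast
    qed
  qed
  moreover have "inj_on (\<lambda>(u,v). {u,v}) (P \<times> ({1..n} - P))"
    by (auto simp: inj_on_def doubleton_eq_iff)
  moreover have "card ({1..n} - P) = n - card P" using assms by (simp add: card_Diff_subset finite_subset)
  ultimately show ?thesis by (simp add: card_image card_cartesian_product)
qed

lemma L9:
  assumes "2 * k \<le> n"
  shows "matchings n k \<noteq> {}"
proof -
  define M0 where "M0 = (\<lambda>i. {2*i+1, 2*i+2}) ` {..<k}"
  have inj: "inj_on (\<lambda>i::nat. {2*i+1, 2*i+2}) {..<k}"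
    by (auto simp: inj_on_def doubleton_eq_iff)
  have "M0 \<subseteq> complete_edges n"
  proof
    fix e assume "e \<in> M0"
    then obtain i where i: "i < k" "e = {2*i+1, 2*i+2}" unfolding M0_def by blast
    have "2*i+1 \<noteq> 2*i+2" "2*i+1 \<in> {1..n}" "2*i+2 \<in> {1..n}" using i(1) assms by auto
    then show "e \<in> complete_edges n" unfolding complete_edges_def using i(2) by blast
  qed
  moreover have "card M0 = k" unfolding M0_def using inj by (simp add: card_image)
  moreover have "\<forall>e\<in>M0. \<forall>f\<in>M0. e \<noteq> f \<longrightarrow> e \<inter> f = {}"
  proof (intro ballI impI)
    fix e f assume "e \<in> M0" "f \<in> M0" "e \<noteq> f"
    then obtain i j where "e = {2*i+1, 2*i+2}" "f = {2*j+1, 2*j+2}" "i \<noteq> j" unfolding M0_def by blast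
    then show "e \<inter> f = {}" by auto
  qed
  ultimately have "M0 \<in> matchings n k" by (simp add: matchings_def)
  then show ?thesis by auto
qed

lemma cheb_sum:
  fixes X :: "'a \<Rightarrow> real"
  assumes "finite A" "t \<le> \<mu>"
  shows "real (card {x\<in>A. X x < t}) * (\<mu> - t)^2 \<le> (\<Sum>x\<in>A. (X x - \<mu>)^2)"
proof -
  have "real (card {x\<in>A. X x < t}) * (\<mu> - t)^2 = (\<Sum>x\<in>{x\<in>A. X x < t}. (\<mu> - t)^2)"
    by simp
  also have "\<dots> \<le> (\<Sum>x\<in>{x\<in>A. X x < t}. (X x - \<mu>)^2)"
  proof (rule sum_mono)
    fix x assume "x \<in> {x\<in>A. X x < t}"
    then have "0 \<le> \<mu> - t" "\<mu> - t \<le> \<mu> - X x" using assms by auto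
    then have "(\<mu> - t)^2 \<le> (\<mu> - X x)^2" by (intro power_mono) simp_all
    then show "(\<mu> - t)^2 \<le> (X x - \<mu>)^2" by (simp add: power2_commute)
  qed
  also have "\<dots> \<le> (\<Sum>x\<in>A. (X x - \<mu>)^2)"
    using assms(1) by (intro sum_mono2) auto
  finally show ?thesis .
qed

lemma sum_sq_expand:
  fixes X :: "'a \<Rightarrow> real"
  shows "(\<Sum>x\<in>A. (X x - \<mu>)^2) = (\<Sum>x\<in>A. (X x)^2) - 2 * \<mu> * (\<Sum>x\<in>A. X x) + real (card A) * \<mu>^2"
proof -
  have "(\<Sum>x\<in>A. (X x - \<mu>)^2) = (\<Sum>x\<in>A. (X x)^2 - 2 * \<mu> * X x + \<mu>^2)"
    by (intro sum.cong refl) (simp add: power2_diff algebra_simps)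
  also have "\<dots> = (\<Sum>x\<in>A. (X x)^2) - (\<Sum>x\<in>A. 2 * \<mu> * X x) + (\<Sum>x\<in>A. \<mu>^2)"
    by (simp add: sum.distrib sum_subtractf)
  also have "(\<Sum>x\<in>A. 2 * \<mu> * X x) = 2 * \<mu> * (\<Sum>x\<in>A. X x)"
    by (simp add: sum_distrib_left)
  finally show ?thesis by simp
qed

lemma arith_main:
  fixes N k c m m' s1 s2 S1 S2 dC n :: real
  assumes N: "N > 0" and m: "m > 0" and m': "m' > 0" and c: "c \<ge> 0" "c \<le> m"
    and s2: "s2 \<ge> 0" and dC: "dC \<le> c^2" and k: "k \<ge> 0"
    and F1: "S1 = c * s1" and F2: "N * k = m * s1" and F3: "S2 = S1 + dC * s2"
    and F4: "N * k * k = N * k + m * m' * s2"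
    and mm: "m - m' = 2 * n - 3" "m' = (n - 2) * (n - 3) / 2" and n: "n \<ge> 6" and kn: "2 * k \<le> n"
  shows "S2 - S1^2 / N \<le> N * (k * c / m + 8 * k)"
proof -
  have s1: "s1 = N * k / m" using F2 m by (simp add: field_simps)
  have S1: "S1 = N * (k * c / m)" using F1 s1 by simp
  have s2e: "s2 = N * k * (k - 1) / (m * m')" using F4 m m' by (simp add: field_simps)
  have "S2 \<le> S1 + c^2 * s2" using F3 dC s2 by (simp add: mult_right_mono)
  also have "\<dots> = N * (k * c / m) + N * (c^2 * k * (k - 1) / (m * m'))"
    using S1 s2e by simp
  finally have S2: "S2 \<le> N * (k * c / m) + N * (c^2 * k * (k - 1) / (m * m'))" .
  have S1sq: "S1^2 / N = N * (k * c / m)^2" using S1 N by (simp add: power2_eq_square)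
  have key: "c^2 * k * (k - 1) / (m * m') - (k * c / m)^2 \<le> 8 * k"
  proof -
    have "c^2 * k * (k - 1) / (m * m') \<le> c^2 * k * k / (m * m')"
      using m m' k by (intro divide_right_mono) (auto intro!: mult_left_mono)
    then have "c^2 * k * (k - 1) / (m * m') - (k * c / m)^2 \<le> c^2 * k^2 * (1 / (m * m') - 1 / m^2)"
      by (simp add: power2_eq_square field_simps)
    also have "\<dots> = (c / m)^2 * k^2 * ((m - m') / m')"
      using m m' by (simp add: power2_eq_square field_simps)
    also have "\<dots> \<le> 1 * k^2 * ((m - m') / m')"
    proof (rule mult_right_mono)
      have "c / m \<le> 1" "0 \<le> c / m" using c m by auto
      then have "(c/m)^2 \<le> 1" by (simp add: power_le_one)
      then show "(c / m)^2 * k^2 \<le> 1 * k^2" by (intro mult_right_mono) auto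
      show "0 \<le> (m - m') / m'" using mm n m' by auto
    qed
    also have "\<dots> = k^2 * (2 * (2 * n - 3)) / ((n - 2) * (n - 3))"
    proof -
      have pos: "(n - 2) * (n - 3) \<noteq> 0" using n by auto
      have "(m - m') / m' = (2 * n - 3) / ((n - 2) * (n - 3) / 2)" by (simp only: mm(1) mm(2)[symmetric])
      also have "\<dots> = 2 * (2 * n - 3) / ((n - 2) * (n - 3))" using pos by (simp add: field_simps)
      finally show ?thesis by simp
    qed
    also have "\<dots> \<le> 8 * k"
    proof -
      have pos: "(n - 2) * (n - 3) > 0" using n by auto
      have "k * (2 * n - 3) \<le> (n / 2) * (2 * n - 3)" using kn n by (intro mult_right_mono) auto
      also have "\<dots> \<le> 4 * ((n - 2) * (n - 3))"
      proof -
        have sq: "0 \<le> (n - 6) * (n - 6)" by simp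
        show ?thesis using sq n by (simp add: algebra_simps)
      qed
      finally have "k * (2 * k * (2 * n - 3)) \<le> k * (8 * ((n - 2) * (n - 3)))"
        using k by (intro mult_left_mono) auto
      then have "k^2 * (2 * (2 * n - 3)) \<le> 8 * k * ((n - 2) * (n - 3))"
        by (simp add: power2_eq_square algebra_simps)
      then show ?thesis using pos by (simp add: divide_le_eq)
    qed
    finally show ?thesis .
  qed
  have "S2 - S1^2 / N \<le> N * (k * c / m) + N * (c^2 * k * (k - 1) / (m * m')) - N * (k * c / m)^2"
    using S2 S1sq by simp
  also have "\<dots> = N * (k * c / m) + N * (c^2 * k * (k - 1) / (m * m') - (k * c / m)^2)"
    by (simp add: algebra_simps)
  also have "\<dots> \<le> N * (k * c / m) + N * (8 * k)"
    using key N by (intro add_left_mono mult_left_mono) auto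
  finally show ?thesis by (simp add: algebra_simps)
qed

lemma real_choose2: "real (n choose 2) = real n * (real n - 1) / 2"
proof (induction n)
  case 0 then show ?case by simp
next
  case (Suc n)
  have "Suc n choose 2 = n + (n choose 2)"
    using binomial_Suc_Suc[of n 1] by (simp add: numeral_2_eq_2)
  then show ?case using Suc by (simp add: field_simps)
qed

lemma final_arith:
  fixes b N \<mu> k \<eta> t :: real
  assumes N: "N > 0" and b: "b \<ge> 0" and eta: "\<eta> > 0" "\<eta> \<le> 1" and k: "k \<ge> 0"
    and keta: "k * \<eta>^2 \<ge> 200" and mu: "\<mu> \<ge> k * \<eta>" and t: "t = \<eta> * k / 25"
    and ch: "b * (\<mu> - t)^2 \<le> N * (\<mu> + 8 * k)"
  shows "b \<le> N / 6"
proof -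
  have "\<eta> * \<eta> \<le> \<eta> * 1" using eta by (intro mult_left_mono) auto
  then have "k * \<eta>^2 \<le> k * \<eta>" using k by (simp add: power2_eq_square mult_left_mono)
  then have ke: "k * \<eta> \<ge> 200" using keta by simp
  then have mu200: "\<mu> \<ge> 200" using mu by simp
  have tmu: "t \<le> \<mu> / 25" using t mu by (simp add: field_simps)
  have "24 / 25 * \<mu> \<le> \<mu> - t" using tmu by simp
  moreover have "0 \<le> 24 / 25 * \<mu>" using mu200 by simp
  ultimately have "(24 / 25 * \<mu>)^2 \<le> (\<mu> - t)^2" by (intro power_mono)
  moreover have "(24 / 25 * \<mu>)^2 = 576 / 625 * \<mu>^2" by (simp add: power2_eq_square)
  moreover have "0 \<le> \<mu>^2" by simp
  ultimately have sq: "9 / 10 * \<mu>^2 \<le> (\<mu> - t)^2" by linarith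
  have a1: "6 * \<mu> \<le> 45 / 100 * \<mu>^2" using mu200 by (simp add: power2_eq_square)
  have "(k * \<eta>)^2 \<le> \<mu>^2" using ke mu by (intro power_mono) auto
  moreover have "k * 200 \<le> k * (k * \<eta>^2)" using keta k by (intro mult_left_mono) auto
  ultimately have a2: "200 * k \<le> \<mu>^2" by (simp add: power2_eq_square algebra_simps)
  define q where "q = \<mu>^2"
  have "6 * \<mu> + 48 * k \<le> 9 / 10 * q" using a1 a2 zero_le_power2[of \<mu>] unfolding q_def[symmetric] by linarith
  then have bound: "6 * (\<mu> + 8 * k) \<le> 9 / 10 * \<mu>^2" unfolding q_def by simp
  have "b * (9 / 10 * \<mu>^2) \<le> b * (\<mu> - t)^2" using sq b by (intro mult_left_mono)
  also have "\<dots> \<le> N * (\<mu> + 8 * k)" by (rule ch)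
  also have "\<dots> \<le> N * (9 / 10 * \<mu>^2 / 6)" using bound N by (intro mult_left_mono) auto
  finally have "b * (9 / 10 * \<mu>^2) \<le> N / 6 * (9 / 10 * \<mu>^2)" by simp
  moreover have "9 / 10 * \<mu>^2 > 0" using mu200 by simp
  ultimately show ?thesis by simp
qed

lemma cheb_match:
  assumes n6: "n \<ge> 6" and P: "P \<subseteq> {1..n}" and nk: "2 * k \<le> n"
    and t: "t \<le> real k * real (card P * (n - card P)) / real (n choose 2)"
  shows "real (card {M \<in> matchings n k. real (crossing P M) < t}) *
           (real k * real (card P * (n - card P)) / real (n choose 2) - t)^2
         \<le> real (card (matchings n k)) * (real k * real (card P * (n - card P)) / real (n choose 2) + 8 * real k)"
proof -
  define Ms where "Ms = matchings n k"
  define C where "C = Cr P n"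
  define E where "E = complete_edges n"
  define X where "X M = real (card (M \<inter> C))" for M
  define N where "N = real (card Ms)"
  define c where "c = real (card P * (n - card P))"
  define m where "m = real (n choose 2)"
  define m' where "m' = real ((n - 2) choose 2)"
  define s1n where "s1n = card {M\<in>Ms. {1,2} \<in> M}"
  define s2n where "s2n = card {M\<in>Ms. {1,2} \<in> M \<and> {3,4} \<in> M}"
  define dCn where "dCn = card (DE n \<inter> (C \<times> C))"
  define \<mu> where "\<mu> = real k * c / m"
  define S1 where "S1 = (\<Sum>M\<in>Ms. X M)"
  define S2 where "S2 = (\<Sum>M\<in>Ms. (X M)^2)"
  have finMs: "finite Ms" using fin_M Ms_def by simp
  have Npos: "N > 0" using L9[OF nk] finMs unfolding N_def Ms_def by (simp add: card_gt_0_iff)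
  have CE: "C \<subseteq> E" unfolding C_def E_def Cr_def by auto
  have finE: "finite E" using fin_E E_def by simp
  have cC: "card C = card P * (n - card P)" using L8[OF P] C_def by simp
  have cE: "card E = n choose 2" using L7 E_def by simp
  have "card P * (n - card P) \<le> n choose 2" using card_mono[OF finE CE] cC cE by simp
  then have c_le: "c \<le> m" unfolding c_def m_def by (simp only: of_nat_le_iff)
  have m_pos: "m > 0" unfolding m_def using n6 by simp
  have m'_pos: "m' > 0" unfolding m'_def using n6 by simp
  have MsE: "M \<subseteq> E" "card M = k" if "M \<in> Ms" for M
    using that unfolding Ms_def E_def matchings_def by auto
  have cross: "crossing P M = card (M \<inter> C)" if "M \<in> Ms" for M
    using L1 that unfolding Ms_def C_def by blast
  have n2: "n \<ge> 2" "n \<ge> 4" using n6 by auto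
  have CE': "C \<subseteq> complete_edges n" using CE E_def by simp
  have F1n: "(\<Sum>M\<in>Ms. card (M \<inter> C)) = card C * s1n"
    unfolding Ms_def s1n_def by (rule L3[OF n2(1) CE'])
  have F1: "S1 = c * real s1n"
    unfolding S1_def X_def c_def using F1n cC by (simp flip: of_nat_sum)
  have "(\<Sum>M\<in>Ms. card (M \<inter> E)) = card E * s1n"
    unfolding Ms_def s1n_def E_def by (rule L3[OF n2(1)]) simp
  moreover have "(\<Sum>M\<in>Ms. card (M \<inter> E)) = (\<Sum>M\<in>Ms. k)"
    using MsE by (intro sum.cong refl) (simp add: Int_absorb2)
  ultimately have "card Ms * k = card E * s1n" by simp
  then have F2: "N * real k = m * real s1n"
    unfolding N_def m_def using cE by (metis of_nat_mult)
  have sq: "card (M \<inter> C) * card (M \<inter> C) = card (M \<inter> C) + card {ef \<in> DE n \<inter> (C \<times> C). fst ef \<in> M \<and> snd ef \<in> M}"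
    if "M \<in> Ms" for M
    using L4[OF _ CE'] that unfolding Ms_def by blast
  have "(\<Sum>M\<in>Ms. card (M \<inter> C) * card (M \<inter> C)) = (\<Sum>M\<in>Ms. card (M \<inter> C)) + (\<Sum>M\<in>Ms. card {ef \<in> DE n \<inter> (C \<times> C). fst ef \<in> M \<and> snd ef \<in> M})"
    using sq by (simp add: sum.distrib)
  also have "(\<Sum>M\<in>Ms. card {ef \<in> DE n \<inter> (C \<times> C). fst ef \<in> M \<and> snd ef \<in> M}) = dCn * s2n"
    unfolding Ms_def s2n_def dCn_def by (rule L5[OF n2(2)]) simp
  finally have F3n: "(\<Sum>M\<in>Ms. card (M \<inter> C) * card (M \<inter> C)) = (\<Sum>M\<in>Ms. card (M \<inter> C)) + dCn * s2n" .
  have F3: "S2 = S1 + real dCn * real s2n"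
  proof -
    have "S2 = real (\<Sum>M\<in>Ms. card (M \<inter> C) * card (M \<inter> C))"
      unfolding S2_def X_def by (simp add: power2_eq_square)
    also have "\<dots> = real (\<Sum>M\<in>Ms. card (M \<inter> C)) + real dCn * real s2n"
      using F3n by simp
    also have "real (\<Sum>M\<in>Ms. card (M \<inter> C)) = S1"
      unfolding S1_def X_def by simp
    finally show ?thesis .
  qed
  have sqE: "k * k = k + card {ef \<in> DE n. fst ef \<in> M \<and> snd ef \<in> M}" if "M \<in> Ms" for M
  proof -
    have "card (M \<inter> E) * card (M \<inter> E) = card (M \<inter> E) + card {ef \<in> DE n \<inter> (E \<times> E). fst ef \<in> M \<and> snd ef \<in> M}"
      using L4[of M n k E] that unfolding Ms_def E_def by simp
    moreover have "M \<inter> E = M" using MsE(1)[OF that] by blast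
    moreover have "DE n \<inter> (E \<times> E) = DE n" unfolding DE_def E_def by auto
    ultimately show ?thesis using MsE(2)[OF that] by simp
  qed
  have "(\<Sum>M\<in>Ms. k * k) = (\<Sum>M\<in>Ms. k) + (\<Sum>M\<in>Ms. card {ef \<in> DE n. fst ef \<in> M \<and> snd ef \<in> M})"
    using sqE by (simp add: sum.distrib)
  also have "(\<Sum>M\<in>Ms. card {ef \<in> DE n. fst ef \<in> M \<and> snd ef \<in> M}) = card (DE n) * s2n"
    unfolding Ms_def s2n_def by (rule L5[OF n2(2)]) simp
  finally have "card Ms * k * k = card Ms * k + (n choose 2) * ((n - 2) choose 2) * s2n"
    using L6 by (simp add: mult.assoc)
  then have F4: "N * real k * real k = N * real k + m * m' * real s2n"
    unfolding N_def m_def m'_def by (metis of_nat_add of_nat_mult)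
  have dC: "real dCn \<le> c^2"
  proof -
    have "dCn \<le> card (C \<times> C)" unfolding dCn_def
      using finE CE by (intro card_mono) (auto intro: finite_subset)
    then show ?thesis unfolding c_def using cC by (simp add: card_cartesian_product power2_eq_square flip: of_nat_mult)
  qed
  have mm1: "m = real n * (real n - 1) / 2" unfolding m_def by (rule real_choose2)
  have mm2: "m' = (real n - 2) * (real n - 3) / 2"
    unfolding m'_def real_choose2 using n6 by (simp add: of_nat_diff)
  have mm: "m - m' = 2 * real n - 3" using mm1 mm2 by (simp add: field_simps)
  have ar: "S2 - S1^2 / N \<le> N * (real k * c / m + 8 * real k)"
    by (rule arith_main[OF Npos m_pos m'_pos _ c_le _ dC _ F1 F2 F3 F4 mm mm2])
       (use n6 nk in \<open>auto simp: c_def\<close>)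
  have S1mu: "S1 = N * \<mu>"
    unfolding \<mu>_def using F1 F2 m_pos by (simp add: field_simps)
  have "real (card {M\<in>Ms. X M < t}) * (\<mu> - t)^2 \<le> (\<Sum>M\<in>Ms. (X M - \<mu>)^2)"
    by (rule cheb_sum[OF finMs]) (use t in \<open>simp add: \<mu>_def c_def m_def\<close>)
  also have "\<dots> = S2 - 2 * \<mu> * S1 + N * \<mu>^2"
    unfolding S1_def S2_def N_def by (rule sum_sq_expand)
  also have "\<dots> = S2 - S1^2 / N"
    using S1mu Npos by (simp add: power2_eq_square field_simps)
  also have "\<dots> \<le> N * (\<mu> + 8 * real k)" using ar unfolding \<mu>_def .
  finally have main: "real (card {M\<in>Ms. X M < t}) * (\<mu> - t)^2 \<le> N * (\<mu> + 8 * real k)" .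
  have "{M\<in>Ms. X M < t} = {M \<in> matchings n k. real (crossing P M) < t}"
    using cross unfolding X_def Ms_def by auto
  then show ?thesis using main unfolding \<mu>_def c_def m_def N_def Ms_def by simp
qed

theorem lemma2p11:
  fixes \<eta> :: real
  assumes "\<eta> > 0"
  shows "\<exists>k0::nat. \<forall>k n :: nat. \<forall>P :: nat set.
           k \<ge> k0 \<longrightarrow> n \<ge> 2 * k \<longrightarrow> P \<subseteq> {1..n} \<longrightarrow>
           \<eta> \<le> real (card P) / real n \<longrightarrow> real (card P) / real n \<le> 1 - \<eta> \<longrightarrow>
           measure_pmf.prob (pmf_of_set (matchings n k))
              {M. real (crossing P M) \<ge> \<eta> * real k / 25} \<ge> 5 / 6"
proof -
  define k0 :: nat where "k0 = nat \<lceil>200 / \<eta>^2\<rceil> + 6"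
  show ?thesis
  proof (intro exI[of _ k0] allI impI)
    fix k n :: nat and P :: "nat set"
    assume kk: "k \<ge> k0" and nk: "n \<ge> 2 * k" and P: "P \<subseteq> {1..n}"
      and lo: "\<eta> \<le> real (card P) / real n" and hi: "real (card P) / real n \<le> 1 - \<eta>"
    define p where "p = card P"
    have k6: "k \<ge> 6" using kk k0_def by simp
    have n6: "n \<ge> 6" using nk k6 by auto
    have npos: "real n > 0" using n6 by simp
    have "200 / \<eta>^2 \<le> real k0"
    proof -
      have "200 / \<eta>^2 \<le> real (nat \<lceil>200 / \<eta>^2\<rceil>)" by linarith
      then show ?thesis unfolding k0_def by linarith
    qed
    also have "\<dots> \<le> real k" using kk by simp
    finally have "200 / \<eta>^2 \<le> real k" .
    then have keta: "200 \<le> real k * \<eta>^2" using assms by (simp add: divide_le_eq)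
    have pn: "p \<le> n" unfolding p_def using card_mono[OF _ P] by simp
    have lo': "\<eta> * real n \<le> real p" using lo npos unfolding p_def by (simp add: le_divide_eq)
    have hi': "real p \<le> (1 - \<eta>) * real n" using hi npos unfolding p_def by (simp add: divide_le_eq)
    have "(2 * \<eta>) * real n \<le> 1 * real n" using lo' hi' by (simp add: algebra_simps)
    then have "2 * \<eta> \<le> 1" using npos by (simp only: mult_le_cancel_right_pos)
    then have eta1: "\<eta> \<le> 1" by simp
    have q: "real (n - p) = real n - real p" using pn by (simp add: of_nat_diff)
    have q': "\<eta> * real n \<le> real n - real p" using hi' by (simp add: algebra_simps)
    have cbound: "\<eta> * real n * (real n / 2) \<le> real p * real (n - p)"
    proof (cases "real n / 2 \<le> real p")
      case True
      have "\<eta> * real n * (real n / 2) = (real n / 2) * (\<eta> * real n)" by simp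
      also have "\<dots> \<le> real p * (real n - real p)"
        using True q' assms npos by (intro mult_mono) auto
      finally show ?thesis using q by simp
    next
      case False
      have "\<eta> * real n * (real n / 2) \<le> real p * (real n - real p)"
        using False lo' assms npos by (intro mult_mono) auto
      then show ?thesis using q by simp
    qed
    define c where "c = real (card P * (n - card P))"
    define m where "m = real (n choose 2)"
    have cdef: "c = real p * real (n - p)" unfolding c_def p_def by simp
    have mpos: "m > 0" unfolding m_def using n6 by simp
    have mle: "m \<le> real n * (real n / 2)" unfolding m_def real_choose2 using npos
      by (simp add: field_simps)
    have mu: "real k * \<eta> \<le> real k * c / m"
    proof -
      have "\<eta> = (\<eta> * real n * (real n / 2)) / (real n * (real n / 2))" using npos by simp
      also have "\<dots> \<le> c / (real n * (real n / 2))"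
        using cbound cdef npos by (intro divide_right_mono) auto
      also have "\<dots> \<le> c / m"
        using mle mpos cdef by (intro divide_left_mono) auto
      finally have "\<eta> \<le> c / m" .
      then have "real k * \<eta> \<le> real k * (c / m)" by (intro mult_left_mono) auto
      then show ?thesis by simp
    qed
    define t where "t = \<eta> * real k / 25"
    have "\<eta> * real k / 25 \<le> real k * \<eta>" using assms by simp
    then have tle: "t \<le> real k * c / m" using mu unfolding t_def by linarith
    have ch: "real (card {M \<in> matchings n k. real (crossing P M) < t}) * (real k * c / m - t)^2
         \<le> real (card (matchings n k)) * (real k * c / m + 8 * real k)"
      using cheb_match[OF n6 P nk tle[unfolded c_def m_def]] unfolding c_def m_def .
    define b where "b = real (card {M \<in> matchings n k. real (crossing P M) < t})"
    define N where "N = real (card (matchings n k))"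
    have ne: "matchings n k \<noteq> {}" using L9 nk by simp
    have Npos: "N > 0" using ne fin_M unfolding N_def by (simp add: card_gt_0_iff)
    have b6: "b \<le> N / 6"
      by (rule final_arith[OF Npos _ assms eta1 _ keta mu t_def]) (use ch in \<open>auto simp: b_def N_def\<close>)
    have "matchings n k \<inter> {M. real (crossing P M) \<ge> \<eta> * real k / 25}
          = matchings n k - {M \<in> matchings n k. real (crossing P M) < t}"
      unfolding t_def by auto
    then have "card (matchings n k \<inter> {M. real (crossing P M) \<ge> \<eta> * real k / 25})
          = card (matchings n k) - card {M \<in> matchings n k. real (crossing P M) < t}"
      using fin_M by (simp add: card_Diff_subset)
    moreover have "card {M \<in> matchings n k. real (crossing P M) < t} \<le> card (matchings n k)"
      using fin_M by (intro card_mono) auto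
    ultimately have "real (card (matchings n k \<inter> {M. real (crossing P M) \<ge> \<eta> * real k / 25})) = N - b"
      unfolding N_def b_def by (simp add: of_nat_diff)
    then have "measure_pmf.prob (pmf_of_set (matchings n k)) {M. real (crossing P M) \<ge> \<eta> * real k / 25} = (N - b) / N"
      using ne fin_M by (simp add: measure_pmf_of_set N_def)
    also have "\<dots> \<ge> 5 / 6" using b6 Npos by (simp add: field_simps)
    finally show "measure_pmf.prob (pmf_of_set (matchings n k)) {M. real (crossing P M) \<ge> \<eta> * real k / 25} \<ge> 5 / 6" .
  qed
qed

end
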